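(* Let $X$ be a continuum that is $d(X)$-Baire. Then every nest (family totally ordered by inclusion) of open dense subsets of $X$ has dense intersection.
   Context: A continuum is a nondegenerate compact connected Hausdorff space. $d(X)$ is the least cardinality of a dense subset of $X$; $X$ is $\alpha$-Baire if every family of $\alpha$ many open dense subsets of $X$ has dense intersection. *)

theory Defs
  imports "HOL-Analysis.Analysis" "HOL-Library.Equipollence"
begin

definition continuum :: "'a topology \<Rightarrow> bool" where
  "continuum X \<longleftrightarrow> compact_space X \<and> connected_space X \<and> Hausdorff_space X
     \<and> (\<exists>x\<in>topspace X. \<exists>y\<in>topspace X. x \<noteq> y)"

definition dense_in_space :: "'a topology \<Rightarrow> 'a set \<Rightarrow> bool" where
  "dense_in_space X D \<longleftrightarrow> D \<subseteq> topspace X \<and> X closure_of D = topspace X"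

text \<open>X is alpha-Baire, where the cardinal alpha is given as the cardinality of the set A:
  every family of at most |A| many open dense subsets has dense intersection.\<close>
definition card_Baire :: "'a topology \<Rightarrow> 'b set \<Rightarrow> bool" where
  "card_Baire X A \<longleftrightarrow>
     (\<forall>\<U>. \<U> \<lesssim> A \<and> (\<forall>U\<in>\<U>. openin X U \<and> dense_in_space X U)
        \<longrightarrow> dense_in_space X (topspace X \<inter> \<Inter>\<U>))"

definition density_Baire :: "'a topology \<Rightarrow> bool" where
  "density_Baire X \<longleftrightarrow>
     (\<exists>D. dense_in_space X D \<and> (\<forall>D'. dense_in_space X D' \<longrightarrow> D \<lesssim> D') \<and> card_Baire X D)"

end

theory Submission
  imports Defs
begin

lemma dense_open_Int:
  assumes "openin X U" "dense_in_space X U" "dense_in_space X D"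
  shows "dense_in_space X (D \<inter> U)"
proof -
  have "\<forall>T. openin X T \<and> T \<noteq> {} \<longrightarrow> (D \<inter> U) \<inter> T \<noteq> {}"
  proof (intro allI impI)
    fix T assume T: "openin X T \<and> T \<noteq> {}"
    have "U \<inter> T \<noteq> {}" using assms(2) T unfolding dense_in_space_def dense_intersects_open by blast
    moreover have "openin X (U \<inter> T)" using assms(1) T by auto
    ultimately have "D \<inter> (U \<inter> T) \<noteq> {}" using assms(3) unfolding dense_in_space_def dense_intersects_open by blast
    then show "(D \<inter> U) \<inter> T \<noteq> {}" by blast
  qed
  then show ?thesis using assms(3) unfolding dense_in_space_def dense_intersects_open by blast
qed

lemma dense_mono:
  assumes "dense_in_space X A" "A \<subseteq> B" "B \<subseteq> topspace X"
  shows "dense_in_space X B"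
  using assms unfolding dense_in_space_def
  by (metis closure_of_mono closure_of_subset_topspace subset_antisym)

theorem mainTheorem6:
  fixes X :: "'a topology" and \<N> :: "'a set set"
  assumes "continuum X"
    and "density_Baire X"
    and "\<forall>U\<in>\<N>. openin X U \<and> dense_in_space X U"
    and "\<forall>A\<in>\<N>. \<forall>B\<in>\<N>. A \<subseteq> B \<or> B \<subseteq> A"
  shows "dense_in_space X (topspace X \<inter> \<Inter>\<N>)"
proof -
  obtain D where D: "dense_in_space X D" "card_Baire X D"
    using assms(2) unfolding density_Baire_def by blast
  define D0 where "D0 = {d\<in>D. d \<notin> \<Inter>\<N>}"
  define f where "f = (\<lambda>d. SOME U. U \<in> \<N> \<and> d \<notin> U)"
  have f: "f d \<in> \<N> \<and> d \<notin> f d" if "d \<in> D0" for d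
  proof -
    have "\<exists>U. U \<in> \<N> \<and> d \<notin> U" using that unfolding D0_def by blast
    then show ?thesis unfolding f_def by (rule someI_ex)
  qed
  define N' where "N' = f ` D0"
  have N'sub: "N' \<subseteq> \<N>" using f unfolding N'_def by blast
  have N'le: "N' \<lesssim> D"
    unfolding N'_def D0_def by (rule lepoll_trans[OF image_lepoll subset_imp_lepoll]) blast
  show ?thesis
  proof (cases "\<exists>U\<in>\<N>. \<forall>V\<in>N'. U \<subseteq> V")
    case True
    then obtain U where U: "U \<in> \<N>" "\<forall>V\<in>N'. U \<subseteq> V" by blast
    have "D \<inter> U \<subseteq> topspace X \<inter> \<Inter>\<N>"
    proof
      fix d assume d: "d \<in> D \<inter> U"
      have "d \<in> topspace X" using d D(1) unfolding dense_in_space_def by blast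
      moreover have "d \<in> \<Inter>\<N>"
      proof (rule ccontr)
        assume "d \<notin> \<Inter>\<N>"
        then have "d \<in> D0" using d unfolding D0_def by blast
        then have "f d \<in> N'" "d \<notin> f d" using f unfolding N'_def by auto
        then show False using U d by blast
      qed
      ultimately show "d \<in> topspace X \<inter> \<Inter>\<N>" by blast
    qed
    moreover have "dense_in_space X (D \<inter> U)"
      using dense_open_Int assms(3) U(1) D(1) by blast
    ultimately show ?thesis using dense_mono by blast
  next
    case False
    have "\<Inter>N' \<subseteq> \<Inter>\<N>"
    proof
      fix x assume x: "x \<in> \<Inter>N'"
      show "x \<in> \<Inter>\<N>"
      proof
        fix U assume "U \<in> \<N>"
        then obtain V where "V \<in> N'" "\<not> U \<subseteq> V" using False by blast
        then have "V \<subseteq> U" using assms(4) N'sub \<open>U \<in> \<N>\<close> by blast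
        then show "x \<in> U" using x \<open>V \<in> N'\<close> by blast
      qed
    qed
    moreover have "\<Inter>\<N> \<subseteq> \<Inter>N'" using N'sub by blast
    ultimately have eq: "topspace X \<inter> \<Inter>\<N> = topspace X \<inter> \<Inter>N'" by blast
    have "dense_in_space X (topspace X \<inter> \<Inter>N')"
      using D(2) N'le N'sub assms(3) unfolding card_Baire_def by blast
    then show ?thesis using eq by simp
  qed
qed

end
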